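(* Let $G_1,\ldots,G_k$ be connected graphs whose vertex sets are pairwise disjoint except that a vertex $a$ belongs to every $G_i$. Suppose that no $G_i$ is $a$-outer geometric 1-planar and that each $G_i$ has at most $m$ edges. If $k\ge m+2$, then $\bigcup_{i=1}^k G_i$ is not geometric 1-planar.
   Context: Graphs are finite and simple. An embedding of a graph maps vertices to distinct points of $\mathbb{R}^2$ and each edge to a Jordan arc between its endpoints, such that edges intersect only at common endpoints or in proper crossings. An embedding is 1-planar if every edge is crossed at most once, and geometric if every edge is a straight-line segment; a graph is geometric 1-planar if it has a geometric 1-planar embedding. The outer region of an embedding is the unbounded connected component of $\mathbb{R}^2$ minus the union of all edge arcs. $G$ is $a$-outer geometric 1-planar if it has a geometric 1-planar embedding in which $a$ lies on the outer region. *)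

theory Defs
  imports "HOL-Analysis.Analysis"
begin

definition simple_graph :: "'a set \<Rightarrow> 'a set set \<Rightarrow> bool" where
  "simple_graph V E \<longleftrightarrow> finite V \<and> (\<forall>e\<in>E. e \<subseteq> V \<and> card e = 2)"

definition graph_connected :: "'a set \<Rightarrow> 'a set set \<Rightarrow> bool" where
  "graph_connected V E \<longleftrightarrow> V \<noteq> {} \<and>
     (\<forall>u\<in>V. \<forall>v\<in>V. (u, v) \<in> {(x, y). {x, y} \<in> E}\<^sup>*)"

definition eseg :: "('a \<Rightarrow> real^2) \<Rightarrow> 'a set \<Rightarrow> (real^2) set" where
  "eseg p e = convex hull (p ` e)"

definition geom_embedding :: "'a set \<Rightarrow> 'a set set \<Rightarrow> ('a \<Rightarrow> real^2) \<Rightarrow> bool" where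
  "geom_embedding V E p \<longleftrightarrow>
     inj_on p V \<and>
     (\<forall>v\<in>V. \<forall>e\<in>E. v \<notin> e \<longrightarrow> p v \<notin> eseg p e) \<and>
     (\<forall>e\<in>E. \<forall>f\<in>E. e \<noteq> f \<longrightarrow>
        eseg p e \<inter> eseg p f = p ` (e \<inter> f) \<or>
        (e \<inter> f = {} \<and> (\<exists>x. eseg p e \<inter> eseg p f = {x} \<and> x \<notin> p ` e \<and> x \<notin> p ` f)))"

definition crosses :: "('a \<Rightarrow> real^2) \<Rightarrow> 'a set \<Rightarrow> 'a set \<Rightarrow> bool" where
  "crosses p e f \<longleftrightarrow> e \<inter> f = {} \<and> eseg p e \<inter> eseg p f \<noteq> {}"

definition geom_1planar_embedding :: "'a set \<Rightarrow> 'a set set \<Rightarrow> ('a \<Rightarrow> real^2) \<Rightarrow> bool" where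
  "geom_1planar_embedding V E p \<longleftrightarrow>
     geom_embedding V E p \<and> (\<forall>e\<in>E. card {f\<in>E. crosses p e f} \<le> 1)"

text \<open>Outer region: the unbounded component of the complement of the union of edge arcs
  (library notion outside S = union of unbounded components of -S; for a compact
  set in the plane this is exactly the unique unbounded component).\<close>
definition outer_region :: "'a set set \<Rightarrow> ('a \<Rightarrow> real^2) \<Rightarrow> (real^2) set" where
  "outer_region E p = outside (\<Union>e\<in>E. eseg p e)"

definition geometric_1planar :: "'a set \<Rightarrow> 'a set set \<Rightarrow> bool" where
  "geometric_1planar V E \<longleftrightarrow> (\<exists>p. geom_1planar_embedding V E p)"

text \<open>a lies on the outer region: p a is in the closure of the outer region.\<close>
definition outer_geometric_1planar :: "'a \<Rightarrow> 'a set \<Rightarrow> 'a set set \<Rightarrow> bool" where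
  "outer_geometric_1planar a V E \<longleftrightarrow>
     (\<exists>p. geom_1planar_embedding V E p \<and> p a \<in> closure (outer_region E p))"

end

theory Submission imports Defs begin

lemma half_lemma:
  fixes Ui Uj :: "(real^2) set" and q :: "real^2"
  assumes "closed Ui" "connected (Uj \<union> {q})" "Ui \<inter> Uj \<subseteq> {q}"
    "q \<notin> closure (outside Ui)"
  shows "Uj \<inter> outside Ui = {}"
proof -
  have qi: "q \<in> interior (- outside Ui)" using assms(4) by (simp add: interior_complement)
  obtain r where r0: "r > 0" and rb: "ball q r \<subseteq> interior (- outside Ui)"
    using openE[OF open_interior qi] by blast
  have r: "ball q r \<subseteq> - outside Ui" using rb interior_subset by (rule subset_trans)
  define A where "A = outside Ui"
  define B where "B = inside Ui \<union> ball q r"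
  have oA: "open A" unfolding A_def using assms(1) by (rule open_outside)
  have oB: "open B" unfolding B_def using open_inside[OF assms(1)] by (intro open_Un) auto
  have "A \<inter> B = {}"
  proof -
    have "A \<inter> inside Ui = {}" unfolding A_def using inside_Int_outside[of Ui] by blast
    moreover have "A \<inter> ball q r = {}" unfolding A_def using r by blast
    ultimately show ?thesis unfolding B_def by blast
  qed
  then have AB: "A \<inter> B \<inter> (Uj \<union> {q}) = {}" by blast
  have cov: "Uj \<union> {q} \<subseteq> A \<union> B"
  proof
    fix x assume x: "x \<in> Uj \<union> {q}"
    show "x \<in> A \<union> B"
    proof (cases "x = q")
      case True then show ?thesis using r0 unfolding B_def by simp
    next
      case False then have "x \<notin> Ui" using x assms(3) by blast
      then have "x \<in> inside Ui \<union> outside Ui" using inside_Un_outside[of Ui] by blast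
      then show ?thesis unfolding A_def B_def by blast
    qed
  qed
  have "A \<inter> (Uj \<union> {q}) = {} \<or> B \<inter> (Uj \<union> {q}) = {}"
    using connectedD[OF assms(2) oA oB AB cov] .
  moreover have "q \<in> B" unfolding B_def using r0 by simp
  ultimately have "A \<inter> (Uj \<union> {q}) = {}" by blast
  then show ?thesis unfolding A_def by blast
qed

lemma outside_sub:
  fixes S T :: "(real^2) set"
  assumes "bounded T" "S \<inter> outside T = {}"
  shows "outside T \<subseteq> outside S"
proof
  fix x assume x: "x \<in> outside T"
  have c: "connected (outside T)" using connected_outside[OF assms(1)] by simp
  have "outside T \<subseteq> - S" using assms(2) by blast
  then have "outside T \<subseteq> connected_component_set (- S) x"
    using connected_component_maximal[OF x c] by blast
  moreover have "\<not> bounded (outside T)" using unbounded_outside[OF assms(1)] .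
  ultimately have "\<not> bounded (connected_component_set (- S) x)"
    using bounded_subset by blast
  moreover have "x \<notin> S" using x assms(2) by blast
  ultimately show "x \<in> outside S" unfolding outside_def by simp
qed

lemma key_topo:
  fixes Ui Uj :: "(real^2) set" and q :: "real^2"
  assumes "compact Ui" "compact Uj" "connected (Ui \<union> {q})" "connected (Uj \<union> {q})"
    "Ui \<inter> Uj \<subseteq> {q}" "q \<notin> closure (outside Ui)" "q \<notin> closure (outside Uj)"
  shows False
proof -
  have ci: "closed Ui" "bounded Ui" using assms(1) by (auto intro: compact_imp_closed compact_imp_bounded)
  have cj: "closed Uj" "bounded Uj" using assms(2) by (auto intro: compact_imp_closed compact_imp_bounded)
  have h1: "Uj \<inter> outside Ui = {}"
    by (rule half_lemma[OF ci(1) assms(4) assms(5) assms(6)])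
  have "Uj \<inter> Ui \<subseteq> {q}" using assms(5) by blast
  then have h2: "Ui \<inter> outside Uj = {}"
    by (rule half_lemma[OF cj(1) assms(3) _ assms(7)])
  have "outside Ui \<subseteq> outside Uj" by (rule outside_sub[OF ci(2) h1])
  moreover have "outside Uj \<subseteq> outside Ui" by (rule outside_sub[OF cj(2) h2])
  ultimately have eq: "outside Ui = outside Uj" by (rule subset_antisym)
  have f1: "frontier (outside Ui) \<subseteq> Ui" by (rule frontier_outside_subset[OF ci(1)])
  have f2: "frontier (outside Uj) \<subseteq> Uj" by (rule frontier_outside_subset[OF cj(1)])
  have fr: "frontier (outside Ui) \<subseteq> {q}" using f1 f2 eq assms(5) by auto
  have ne: "outside Ui \<noteq> {}" by (rule outside_bounded_nonempty[OF ci(2)])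
  show False
  proof (cases "outside Ui = UNIV")
    case True then show ?thesis using assms(6) by simp
  next
    case False
    then have "frontier (outside Ui) \<noteq> {}" using frontier_not_empty ne by blast
    then have "q \<in> frontier (outside Ui)" using fr by blast
    then have "q \<in> closure (outside Ui)" unfolding frontier_def by blast
    then show ?thesis using assms(6) by blast
  qed
qed
lemma eseg_compact: "finite e \<Longrightarrow> compact (eseg p e)"
  unfolding eseg_def by (simp add: compact_convex_hull finite_imp_compact)

lemma eseg_connected: "connected (eseg p e)"
  unfolding eseg_def by (simp add: convex_connected)

lemma eseg_mem: "u \<in> e \<Longrightarrow> p u \<in> eseg p e"
  unfolding eseg_def by (meson hull_subset image_eqI subsetD)

lemma reach_conn:
  assumes "(x, y) \<in> {(x, y). {x, y} \<in> E}\<^sup>*"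
  shows "\<exists>C. connected C \<and> p x \<in> C \<and> p y \<in> C \<and> C \<subseteq> (\<Union>e\<in>E. eseg p e) \<union> {p x}"
  using assms
proof (induction rule: rtrancl_induct)
  case base
  then show ?case by (intro exI[of _ "{p x}"]) auto
next
  case (step y z)
  then obtain C where C: "connected C" "p x \<in> C" "p y \<in> C" "C \<subseteq> (\<Union>e\<in>E. eseg p e) \<union> {p x}"
    by blast
  have yz: "{y, z} \<in> E" using step(2) by simp
  let ?D = "C \<union> eseg p {y, z}"
  have "connected ?D" using C eseg_connected eseg_mem[of y "{y,z}" p]
    by (intro connected_Un) auto
  moreover have "?D \<subseteq> (\<Union>e\<in>E. eseg p e) \<union> {p x}" using C yz by blast
  ultimately show ?case using C eseg_mem[of z "{y,z}" p] by blast
qed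

lemma graph_seg_connected:
  assumes "simple_graph V E" "graph_connected V E" "a \<in> V"
  shows "connected ((\<Union>e\<in>E. eseg p e) \<union> {p a})"
proof -
  let ?U = "(\<Union>e\<in>E. eseg p e) \<union> {p a}"
  have ex: "\<forall>e\<in>E. \<exists>D. connected D \<and> p a \<in> D \<and> eseg p e \<subseteq> D \<and> D \<subseteq> ?U"
  proof
    fix e assume e: "e \<in> E"
    then have "e \<subseteq> V" "card e = 2" using assms(1) unfolding simple_graph_def by auto
    then have "e \<noteq> {}" by auto
    then obtain u where u1: "u \<in> e" by blast
    then have u: "u \<in> e" "u \<in> V" using \<open>e \<subseteq> V\<close> by auto
    then have au: "(a, u) \<in> {(x, y). {x, y} \<in> E}\<^sup>*" using assms(2,3) unfolding graph_connected_def by blast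
    obtain C where C: "connected C" "p a \<in> C" "p u \<in> C" "C \<subseteq> ?U"
      using reach_conn[OF au, of p] by blast
    have "connected (C \<union> eseg p e)" using C eseg_connected eseg_mem[OF u(1)]
      by (intro connected_Un) auto
    moreover have "eseg p e \<subseteq> ?U" using e by blast
    then have "C \<union> eseg p e \<subseteq> ?U" using C(4) by (rule Un_least[rotated])
    ultimately show "\<exists>D. connected D \<and> p a \<in> D \<and> eseg p e \<subseteq> D \<and> D \<subseteq> ?U"
      using C(2) by blast
  qed
  obtain D where D: "\<And>e. e \<in> E \<Longrightarrow> connected (D e) \<and> p a \<in> D e \<and> eseg p e \<subseteq> D e \<and> D e \<subseteq> ?U"
    using bchoice[OF ex] by blast
  have eq: "?U = \<Union>(insert {p a} (D ` E))"
  proof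
    show "?U \<subseteq> \<Union>(insert {p a} (D ` E))" using D by blast
    show "\<Union>(insert {p a} (D ` E)) \<subseteq> ?U" using D by blast
  qed
  have "connected (\<Union>(insert {p a} (D ` E)))"
    by (rule connected_Union) (use D in auto)
  then show ?thesis using eq by simp
qed

lemma restrict_emb:
  assumes "geom_1planar_embedding V E p" "V' \<subseteq> V" "E' \<subseteq> E" "finite E"
  shows "geom_1planar_embedding V' E' p"
proof -
  have c1: "\<forall>e\<in>E. card {f\<in>E. crosses p e f} \<le> 1" and g: "geom_embedding V E p"
    using assms(1) unfolding geom_1planar_embedding_def by auto
  have c2: "\<forall>e\<in>E'. card {f\<in>E'. crosses p e f} \<le> 1"
  proof
    fix e assume e: "e \<in> E'"
    have "card {f\<in>E. crosses p e f} \<le> 1" using c1 e assms(3) by blast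
    moreover have "card {f\<in>E'. crosses p e f} \<le> card {f\<in>E. crosses p e f}"
      using assms(3,4) by (intro card_mono) auto
    ultimately show "card {f\<in>E'. crosses p e f} \<le> 1" by linarith
  qed
  have g1: "inj_on p V" and g2: "\<forall>v\<in>V. \<forall>e\<in>E. v \<notin> e \<longrightarrow> p v \<notin> eseg p e"
    and g3: "\<forall>e\<in>E. \<forall>f\<in>E. e \<noteq> f \<longrightarrow>
        eseg p e \<inter> eseg p f = p ` (e \<inter> f) \<or>
        (e \<inter> f = {} \<and> (\<exists>x. eseg p e \<inter> eseg p f = {x} \<and> x \<notin> p ` e \<and> x \<notin> p ` f))"
    using g unfolding geom_embedding_def by auto
  have 1: "inj_on p V'" using inj_on_subset[OF g1 assms(2)] .
  have 2: "\<forall>v\<in>V'. \<forall>e\<in>E'. v \<notin> e \<longrightarrow> p v \<notin> eseg p e"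
  proof (intro ballI impI)
    fix v e assume "v \<in> V'" "e \<in> E'" "v \<notin> e"
    then show "p v \<notin> eseg p e" using g2[rule_format, of v e] assms(2,3) by blast
  qed
  have 3: "\<forall>e\<in>E'. \<forall>f\<in>E'. e \<noteq> f \<longrightarrow>
        eseg p e \<inter> eseg p f = p ` (e \<inter> f) \<or>
        (e \<inter> f = {} \<and> (\<exists>x. eseg p e \<inter> eseg p f = {x} \<and> x \<notin> p ` e \<and> x \<notin> p ` f))"
  proof (intro ballI impI)
    fix e f assume ef: "e \<in> E'" "f \<in> E'" "e \<noteq> f"
    have "e \<in> E" "f \<in> E" using ef assms(3) by auto
    then show "eseg p e \<inter> eseg p f = p ` (e \<inter> f) \<or>
        (e \<inter> f = {} \<and> (\<exists>x. eseg p e \<inter> eseg p f = {x} \<and> x \<notin> p ` e \<and> x \<notin> p ` f))"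
      by (rule g3[rule_format, OF _ _ ef(3)])
  qed
  have "geom_embedding V' E' p" unfolding geom_embedding_def by (rule conjI[OF 1 conjI[OF 2 3]])
  then show ?thesis unfolding geom_1planar_embedding_def using c2 by (rule conjI)
qed

theorem mainTheorem11:
  fixes V :: "nat \<Rightarrow> 'a set" and E :: "nat \<Rightarrow> 'a set set" and a :: 'a and k m :: nat
  assumes graphs: "\<And>i. i \<in> {1..k} \<Longrightarrow> simple_graph (V i) (E i)"
    and conn: "\<And>i. i \<in> {1..k} \<Longrightarrow> graph_connected (V i) (E i)"
    and a_in: "\<And>i. i \<in> {1..k} \<Longrightarrow> a \<in> V i"
    and disj: "\<And>i j. i \<in> {1..k} \<Longrightarrow> j \<in> {1..k} \<Longrightarrow> i \<noteq> j \<Longrightarrow> V i \<inter> V j = {a}"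
    and not_outer: "\<And>i. i \<in> {1..k} \<Longrightarrow> \<not> outer_geometric_1planar a (V i) (E i)"
    and few_edges: "\<And>i. i \<in> {1..k} \<Longrightarrow> card (E i) \<le> m"
    and k_big: "k \<ge> m + 2"
  shows "\<not> geometric_1planar (\<Union>i\<in>{1..k}. V i) (\<Union>i\<in>{1..k}. E i)"
proof
  assume "geometric_1planar (\<Union>i\<in>{1..k}. V i) (\<Union>i\<in>{1..k}. E i)"
  then obtain p where p: "geom_1planar_embedding (\<Union>i\<in>{1..k}. V i) (\<Union>i\<in>{1..k}. E i) p"
    unfolding geometric_1planar_def by blast
  define EE where "EE = (\<Union>i\<in>{1..k}. E i)"
  define U where "U i = (\<Union>e\<in>E i. eseg p e)" for i
  have finV: "finite (V i)" if "i \<in> {1..k}" for i using graphs[OF that] unfolding simple_graph_def by blast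
  have edge: "e \<subseteq> V i \<and> card e = 2" if "i \<in> {1..k}" "e \<in> E i" for i e
    using graphs[OF that(1)] that(2) unfolding simple_graph_def by blast
  have finE: "finite (E i)" if "i \<in> {1..k}" for i
  proof -
    have "E i \<subseteq> Pow (V i)" using edge[OF that] by blast
    then show ?thesis using finV[OF that] finite_subset by blast
  qed
  have finEE: "finite EE" unfolding EE_def using finE by blast
  have uniq: "i = j" if "i \<in> {1..k}" "j \<in> {1..k}" "e \<in> E i" "e \<in> E j" for i j e
  proof (rule ccontr)
    assume "i \<noteq> j"
    moreover have "e \<subseteq> V i" "e \<subseteq> V j" using edge[OF that(1,3)] edge[OF that(2,4)] by auto
    ultimately have "e \<subseteq> {a}" using disj[OF that(1,2)] by blast
    then have "card e \<le> card {a}" by (intro card_mono) auto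
    then have "card e \<le> 1" by simp
    then show False using edge[OF that(1,3)] by simp
  qed
  have emb: "geom_1planar_embedding (V i) (E i) p" if "i \<in> {1..k}" for i
    using restrict_emb[OF p] finEE that unfolding EE_def by blast
  have nout: "p a \<notin> closure (outside (U i))" if "i \<in> {1..k}" for i
    using not_outer[OF that] emb[OF that] unfolding outer_geometric_1planar_def outer_region_def U_def
    by blast
  have compU: "compact (U i)" if "i \<in> {1..k}" for i
    unfolding U_def using finE[OF that] edge[OF that]
  proof (intro compact_UN)
    fix e assume "e \<in> E i"
    then have "card e = 2" using edge[OF that] by blast
    then have "finite e" by (metis card.infinite zero_neq_numeral)
    then show "compact (eseg p e)" by (rule eseg_compact)
  qed (rule finE[OF that])
  have connU: "connected (U i \<union> {p a})" if "i \<in> {1..k}" for i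
    unfolding U_def by (rule graph_seg_connected[OF graphs[OF that] conn[OF that] a_in[OF that]])
  have ge: "geom_embedding (\<Union>i\<in>{1..k}. V i) EE p" using p unfolding geom_1planar_embedding_def EE_def by blast
  have ge3: "eseg p e \<inter> eseg p f = p ` (e \<inter> f) \<or>
        (e \<inter> f = {} \<and> (\<exists>x. eseg p e \<inter> eseg p f = {x} \<and> x \<notin> p ` e \<and> x \<notin> p ` f))"
    if "e \<in> EE" "f \<in> EE" "e \<noteq> f" for e f
  proof -
    have g3: "\<forall>e\<in>EE. \<forall>f\<in>EE. e \<noteq> f \<longrightarrow>
        eseg p e \<inter> eseg p f = p ` (e \<inter> f) \<or>
        (e \<inter> f = {} \<and> (\<exists>x. eseg p e \<inter> eseg p f = {x} \<and> x \<notin> p ` e \<and> x \<notin> p ` f))"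
      using ge unfolding geom_embedding_def by auto
    show ?thesis by (rule g3[rule_format, OF that])
  qed
  have cross: "\<exists>e\<in>E i. \<exists>f\<in>E j. crosses p e f" if ij: "i \<in> {1..k}" "j \<in> {1..k}" "i \<noteq> j" for i j
  proof (rule ccontr)
    assume nc: "\<not> (\<exists>e\<in>E i. \<exists>f\<in>E j. crosses p e f)"
    have "U i \<inter> U j \<subseteq> {p a}"
    proof
      fix x assume "x \<in> U i \<inter> U j"
      then obtain e f where ef: "e \<in> E i" "f \<in> E j" "x \<in> eseg p e" "x \<in> eseg p f"
        unfolding U_def by blast
      have "e \<noteq> f" using uniq ef ij by blast
      moreover have "e \<in> EE" "f \<in> EE" using ef ij unfolding EE_def by auto
      ultimately have alt: "eseg p e \<inter> eseg p f = p ` (e \<inter> f) \<or>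
        (e \<inter> f = {} \<and> (\<exists>x. eseg p e \<inter> eseg p f = {x} \<and> x \<notin> p ` e \<and> x \<notin> p ` f))"
        using ge3 by blast
      have "\<not> crosses p e f" using nc ef by blast
      then have "eseg p e \<inter> eseg p f = p ` (e \<inter> f)" using alt unfolding crosses_def by blast
      moreover have "e \<subseteq> V i" "f \<subseteq> V j" using edge ef ij by auto
      then have "e \<inter> f \<subseteq> {a}" using disj[OF ij] by blast
      ultimately show "x \<in> {p a}" using ef by blast
    qed
    then show False by (rule key_topo[OF compU[OF ij(1)] compU[OF ij(2)] connU[OF ij(1)] connU[OF ij(2)] _ nout[OF ij(1)] nout[OF ij(2)]])
  qed
  define P where "P = Sigma {1..k} (\<lambda>i. {1..k} - {i})"
  have "\<forall>ij\<in>P. \<exists>e. e \<in> E (fst ij) \<and> (\<exists>f\<in>E (snd ij). crosses p e f)"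
  proof
    fix ij assume "ij \<in> P"
    moreover obtain i j where "ij = (i, j)" by (cases ij)
    ultimately have "ij = (i, j)" "i \<in> {1..k}" "j \<in> {1..k}" "i \<noteq> j" unfolding P_def by auto
    then show "\<exists>e. e \<in> E (fst ij) \<and> (\<exists>f\<in>E (snd ij). crosses p e f)" using cross[of i j] by auto
  qed
  then obtain g where g: "\<And>ij. ij \<in> P \<Longrightarrow> g ij \<in> E (fst ij) \<and> (\<exists>f\<in>E (snd ij). crosses p (g ij) f)"
    using bchoice[of P "\<lambda>ij e. e \<in> E (fst ij) \<and> (\<exists>f\<in>E (snd ij). crosses p e f)"] by blast
  have Psub: "fst ij \<in> {1..k} \<and> snd ij \<in> {1..k}" if "ij \<in> P" for ij using that unfolding P_def by auto
  have "inj_on g P"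
  proof (rule inj_onI)
    fix x y assume xy: "x \<in> P" "y \<in> P" "g x = g y"
    have "g x \<in> E (fst x)" "g x \<in> E (fst y)" using g[OF xy(1)] g[OF xy(2)] xy(3) by auto
    then have 1: "fst x = fst y" using uniq[of "fst x" "fst y" "g x"] Psub[OF xy(1)] Psub[OF xy(2)] by blast
    obtain f where f: "f \<in> E (snd x)" "crosses p (g x) f" using g xy by blast
    obtain f' where f': "f' \<in> E (snd y)" "crosses p (g y) f'" using g xy by blast
    have gE: "g x \<in> EE" using g[OF xy(1)] Psub[OF xy(1)] unfolding EE_def by blast
    have "card {h\<in>EE. crosses p (g x) h} \<le> 1" using p gE unfolding geom_1planar_embedding_def EE_def by blast
    moreover have "f \<in> {h\<in>EE. crosses p (g x) h}" "f' \<in> {h\<in>EE. crosses p (g x) h}"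
    proof -
      have "f \<in> EE" using f(1) Psub[OF xy(1)] unfolding EE_def by blast
      moreover have "f' \<in> EE" using f'(1) Psub[OF xy(2)] unfolding EE_def by blast
      ultimately show "f \<in> {h\<in>EE. crosses p (g x) h}" "f' \<in> {h\<in>EE. crosses p (g x) h}"
        using f(2) f'(2) xy(3) by auto
    qed
    ultimately have "f = f'" using finEE by (metis (no_types, lifting) One_nat_def card_le_Suc0_iff_eq finite_subset mem_Collect_eq subsetI)
    then have "f \<in> E (snd y)" using f'(1) by simp
    then have "snd x = snd y" using uniq[of "snd x" "snd y" f] f(1) Psub[OF xy(1)] Psub[OF xy(2)] by blast
    then show "x = y" using 1 by (simp add: prod_eq_iff)
  qed
  moreover have "g ` P \<subseteq> EE" using g Psub unfolding EE_def by blast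
  ultimately have "card P \<le> card EE" using finEE by (metis card_inj_on_le)
  also have "card EE \<le> (\<Sum>i\<in>{1..k}. card (E i))" unfolding EE_def by (rule card_UN_le) simp
  also have "\<dots> \<le> k * m" using few_edges sum_bounded_above[of "{1..k}" "\<lambda>i. card (E i)" m] by simp
  finally have le: "card P \<le> k * m" .
  have "card P = (\<Sum>i\<in>{1..k}. card ({1..k} - {i}))" unfolding P_def by (rule card_SigmaI) auto
  also have "\<dots> = k * (k - 1)" by simp
  finally have "k * (k - 1) \<le> k * m" using le by simp
  then have "k - 1 \<le> m" using k_big by simp
  then show False using k_big by simp
qed
end
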